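(* For integers $n,m$ and $y=(y_1,y_2,y_3)\in Q$, \[\sum_{r=y_1}^n\sum_{s=y_1+y_2}^m\mathcal{K}_{n,m;r,s}(z/q,w/q;q)\Phi_{r,s;y}(u,v;c,d;z,w;q)=z^{y_1}w^{y_1+y_2}q^{\frac12(y_1^2+y_2^2+y_3^2)-2y_1-y_2}\,\Phi_{n,m;y}(uzq^{y_{12}},vwq^{y_{23}};czq^{y_{12}},dwq^{y_{23}};z,w;q).\]
   Context: $Q=\{y\in\mathbb{Z}^3:y_1+y_2+y_3=0\}$, $y_{ij}:=y_i-y_j$. For $n\in\mathbb{Z}$, $(a;q)_n=(a;q)_\infty/(aq^n;q)_\infty$ ($1/(q;q)_n=0$ for $n<0$). $\mathcal{K}_{n,m;r,s}(z,w;q):=\frac{z^rw^sq^{r^2-rs+s^2}}{(q;q)_{n-r}(q;q)_{m-s}}$. $\Phi_{n,m;y}(z,w;q):=\frac{(zwq;q)_{n+m}}{(q;q)_{n-y_1}(zq;q)_{n-y_2}(zwq;q)_{n-y_3}(q;q)_{m+y_3}(wq;q)_{m+y_2}(zwq;q)_{m+y_1}}$. With $\rho=(1,2,3)$, $\sigma\in S_3$ in one-line notation and $\chi$ the indicator, $\Phi_{n,m}(u,v;c,d;z,w;q):=\sum_{\sigma\in S_3}\operatorname{sgn}(\sigma)(uz)^{\sigma_1-1}(v/d)^{\chi(\sigma_3=1)}(c/u)^{\chi(\sigma_1=3)}(dw)^{3-\sigma_3}\Phi_{n,m;\sigma-\rho}(z/q,w/q;q)$, and \[\Phi_{n,m;y}(u,v;c,d;z,w;q):=\frac{\Phi_{n-y_1,m-y_1-y_2}(u,v;c,d;zq^{y_{12}},wq^{y_{23}};q)}{(z;q)_{y_{12}}(w;q)_{y_{23}}(zw/q;q)_{y_{13}}}.\]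 *)

theory Defs
  imports Complex_Main "HOL-Combinatorics.Permutations"
begin

text \<open>q-Pochhammer symbol for integer n:
  (a;q)_n = (a;q)_inf / (a q^n;q)_inf, i.e. the finite product for n >= 0 and
  1 / prod_{k=1}^{-n} (1 - a q^{-k}) for n < 0.  With the convention x/0 = 0
  this gives 1/(q;q)_n = 0 for n < 0.\<close>
definition qpoch :: "complex \<Rightarrow> complex \<Rightarrow> int \<Rightarrow> complex" where
  "qpoch a q n =
     (if 0 \<le> n then (\<Prod>k<nat n. (1 - a * q ^ k))
      else inverse (\<Prod>k\<in>{1..nat (- n)}. (1 - a * inverse q ^ k)))"

definition Kker :: "int \<Rightarrow> int \<Rightarrow> int \<Rightarrow> int \<Rightarrow> complex \<Rightarrow> complex \<Rightarrow> complex \<Rightarrow> complex" where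
  "Kker n m r s z w q =
     z powi r * w powi s * q powi (r\<^sup>2 - r * s + s\<^sup>2) / (qpoch q q (n - r) * qpoch q q (m - s))"

definition Phi0 :: "int \<Rightarrow> int \<Rightarrow> int \<Rightarrow> int \<Rightarrow> int \<Rightarrow> complex \<Rightarrow> complex \<Rightarrow> complex \<Rightarrow> complex" where
  "Phi0 n m y1 y2 y3 z w q =
     qpoch (z * w * q) q (n + m) /
     (qpoch q q (n - y1) * qpoch (z * q) q (n - y2) * qpoch (z * w * q) q (n - y3) *
      qpoch q q (m + y3) * qpoch (w * q) q (m + y2) * qpoch (z * w * q) q (m + y1))"

text \<open>Phi_{n,m}(u,v;c,d;z,w;q): sum over S_3 (permutations of {1,2,3}, one-line
  notation sigma = (sigma 1, sigma 2, sigma 3)), rho = (1,2,3).\<close>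
definition PhiS :: "int \<Rightarrow> int \<Rightarrow> complex \<Rightarrow> complex \<Rightarrow> complex \<Rightarrow> complex \<Rightarrow> complex \<Rightarrow> complex \<Rightarrow> complex \<Rightarrow> complex" where
  "PhiS n m u v c d z w q =
     (\<Sum>\<sigma>\<in>{\<sigma>::int \<Rightarrow> int. \<sigma> permutes {1,2,3}}.
        of_int (sign \<sigma>) * (u * z) ^ nat (\<sigma> 1 - 1)
        * (if \<sigma> 3 = 1 then v / d else 1)
        * (if \<sigma> 1 = 3 then c / u else 1)
        * (d * w) ^ nat (3 - \<sigma> 3)
        * Phi0 n m (\<sigma> 1 - 1) (\<sigma> 2 - 2) (\<sigma> 3 - 3) (z / q) (w / q) q)"

definition PhiY :: "int \<Rightarrow> int \<Rightarrow> int \<Rightarrow> int \<Rightarrow> int \<Rightarrow> complex \<Rightarrow> complex \<Rightarrow> complex \<Rightarrow> complex \<Rightarrow> complex \<Rightarrow> complex \<Rightarrow> complex \<Rightarrow> complex" where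
  "PhiY n m y1 y2 y3 u v c d z w q =
     PhiS (n - y1) (m - y1 - y2) u v c d (z * q powi (y1 - y2)) (w * q powi (y2 - y3)) q /
     (qpoch z q (y1 - y2) * qpoch w q (y2 - y3) * qpoch (z * w / q) q (y1 - y3))"

end

theory Submission
  imports Defs
begin


definition P :: "complex \<Rightarrow> complex \<Rightarrow> nat \<Rightarrow> complex" where
  "P a q N = (\<Prod>k<N. 1 - a * q ^ k)"

lemma P_0[simp]: "P a q 0 = 1" by (simp add: P_def)
lemma P_Suc: "P a q (Suc N) = P a q N * (1 - a * q ^ N)" by (simp add: P_def)
lemma P_add: "P a q (M + N) = P a q M * P (a * q ^ M) q N"
  by (induction N) (simp_all add: P_Suc power_add mult.assoc)

lemma P_nz: "(\<And>k. 1 - a * q ^ k \<noteq> 0) \<Longrightarrow> P a q N \<noteq> 0"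
  by (simp add: P_def)

definition fJ :: "complex \<Rightarrow> complex \<Rightarrow> nat \<Rightarrow> nat \<Rightarrow> complex" where
  "fJ t q N i = t^i * q^(i*i-i) / (P q q (N-i) * P q q i * P t q i)"

definition gJ :: "complex \<Rightarrow> complex \<Rightarrow> nat \<Rightarrow> nat \<Rightarrow> complex" where
  "gJ t q N i = (if i = 0 then 0 else
     - (q^(N+1-i) * t^i * q^(i*i-i) / (P q q (i-1) * P q q (N+1-i) * P t q (i-1))))"

lemma J_term:
  assumes hq: "\<And>k. 1 - q * q ^ k \<noteq> 0" and ht: "\<And>k. 1 - t * q ^ k \<noteq> 0"
  shows "(1-q^(i+r+1))*(1-t*q^(i+r)) * fJ t q (i+r+1) i - fJ t q (i+r) i
         = gJ t q (i+r) (i+1) - gJ t q (i+r) i"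
proof (cases i)
  case 0
  have "P q q r \<noteq> 0" by (rule P_nz[OF hq])
  moreover have "1 - q * q^r \<noteq> 0" by (rule hq)
  ultimately show ?thesis using 0
    by (simp add: fJ_def gJ_def P_Suc field_simps)
next
  case (Suc j)
  have n1: "P q q r \<noteq> 0" "P q q j \<noteq> 0" "P t q j \<noteq> 0" using P_nz[OF hq] P_nz[OF ht] by auto
  have n2: "1 - q * q^r \<noteq> 0" "1 - q * q^j \<noteq> 0" "1 - t * q^j \<noteq> 0" using hq ht by auto
  have e1: "Suc j + r + 1 - Suc j = Suc r" "Suc j + r - Suc j = r" "Suc j + r + 1 - Suc (Suc j) = r" by auto
  show ?thesis using Suc n1 n2
    apply (simp add: fJ_def gJ_def P_Suc e1 del: of_nat_Suc)
    apply (simp add: power_add)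
    apply (simp add: divide_simps)
    apply (simp add: algebra_simps)
    done
qed

lemma J_last:
  assumes hq: "\<And>k. 1 - q * q ^ k \<noteq> 0" and ht: "\<And>k. 1 - t * q ^ k \<noteq> 0"
  shows "(1-q^(N+1))*(1-t*q^N) * fJ t q (N+1) (N+1) = - gJ t q N (N+1)"
proof -
  have n1: "P q q N \<noteq> 0" "P t q N \<noteq> 0" using P_nz[OF hq] P_nz[OF ht] by auto
  have n2: "1 - q * q^N \<noteq> 0" "1 - t * q^N \<noteq> 0" using hq ht by auto
  show ?thesis using n1 n2 by (simp add: fJ_def gJ_def P_Suc del: of_nat_Suc)
qed

lemma J_sum:
  assumes hq: "\<And>k. 1 - q * q ^ k \<noteq> 0" and ht: "\<And>k. 1 - t * q ^ k \<noteq> 0"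
  shows "(\<Sum>i\<le>N. fJ t q N i) = 1 / (P q q N * P t q N)"
proof (induction N)
  case 0
  then show ?case by (simp add: fJ_def)
next
  case (Suc N)
  define c where "c = (1-q^(N+1))*(1-t*q^N)"
  have tel: "(\<Sum>i\<le>N. c * fJ t q (N+1) i - fJ t q N i) = gJ t q N (N+1)"
  proof -
    have "(\<Sum>i\<le>N. c * fJ t q (N+1) i - fJ t q N i) = (\<Sum>i<Suc N. gJ t q N (Suc i) - gJ t q N i)"
    proof (rule sum.cong)
      show "{..N} = {..<Suc N}" by auto
    next
      fix i assume "i \<in> {..<Suc N}"
      then obtain r where r: "N = i + r" by (metis le_Suc_ex lessThan_iff less_Suc_eq_le)
      show "c * fJ t q (N+1) i - fJ t q N i = gJ t q N (Suc i) - gJ t q N i"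
        using J_term[OF hq ht, of i r] unfolding c_def r by simp
    qed
    also have "\<dots> = gJ t q N (Suc N) - gJ t q N 0" by (rule sum_lessThan_telescope)
    also have "\<dots> = gJ t q N (Suc N)" by (simp add: gJ_def)
    finally show ?thesis by simp
  qed
  have "c * (\<Sum>i\<le>Suc N. fJ t q (Suc N) i) = (\<Sum>i\<le>N. c * fJ t q (N+1) i) + c * fJ t q (N+1) (N+1)"
    by (simp add: sum_distrib_left distrib_left)
  also have "\<dots> = (\<Sum>i\<le>N. fJ t q N i)"
    using tel J_last[OF hq ht, of N] unfolding c_def by (simp add: sum_subtractf diff_eq_eq add.commute)
  finally have e: "c * (\<Sum>i\<le>Suc N. fJ t q (Suc N) i) = 1 / (P q q N * P t q N)" using Suc by simp
  have n1: "P q q N \<noteq> 0" "P t q N \<noteq> 0" using P_nz[OF hq] P_nz[OF ht] by auto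
  have n2: "1 - q * q^N \<noteq> 0" "1 - t * q^N \<noteq> 0" using hq ht by auto
  have cnz: "c \<noteq> 0" using n2 unfolding c_def by simp
  have pp: "P q q (Suc N) * P t q (Suc N) = P q q N * P t q N * c"
    unfolding c_def by (simp add: P_Suc algebra_simps)
  have "(\<Sum>i\<le>Suc N. fJ t q (Suc N) i) = (c * (\<Sum>i\<le>Suc N. fJ t q (Suc N) i)) / c"
    using cnz by simp
  also have "\<dots> = 1 / (P q q (Suc N) * P t q (Suc N))" unfolding e pp by simp
  finally show ?case .
qed



definition fV1 :: "complex \<Rightarrow> complex \<Rightarrow> nat \<Rightarrow> nat \<Rightarrow> nat \<Rightarrow> complex" where
  "fV1 x q a b k = x^k * q^(k*k-k) / (P q q k * P x q k * P q q (a-k) * P q q (b-k))"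

definition gV1 :: "complex \<Rightarrow> complex \<Rightarrow> nat \<Rightarrow> nat \<Rightarrow> nat \<Rightarrow> complex" where
  "gV1 x q a b k = (if k = 0 then 0 else
     - (q^(b+1-k) * x^k * q^(k*k-k) / (P q q (k-1) * P x q (k-1) * P q q (a-k) * P q q (b+1-k))))"

definition fV2 :: "complex \<Rightarrow> complex \<Rightarrow> nat \<Rightarrow> nat \<Rightarrow> nat \<Rightarrow> complex" where
  "fV2 x q a b k = q^((a-k)*(b-k)) / (P q q k * P x q k * P q q (a-k) * P q q (b-k))"

definition gV2 :: "complex \<Rightarrow> complex \<Rightarrow> nat \<Rightarrow> nat \<Rightarrow> nat \<Rightarrow> complex" where
  "gV2 x q a b k = (if k = 0 then 0 else
     - (q^((a+1-k)*(b+1-k)) / (P q q (k-1) * P x q (k-1) * P q q (a-k) * P q q (b+1-k))))"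

lemma V1_term:
  assumes hq: "\<And>k. 1 - q * q ^ k \<noteq> 0" and hx: "\<And>k. 1 - x * q ^ k \<noteq> 0"
  shows "(1 - x*q^(k+r))*(1-q^(k+r+1)) * fV1 x q (k+r+1+s) (k+r+1) k
        - (1 - x*q^((k+r+1+s)+(k+r))) * fV1 x q (k+r+1+s) (k+r) k
         = gV1 x q (k+r+1+s) (k+r) (k+1) - gV1 x q (k+r+1+s) (k+r) k"
proof (cases k)
  case 0
  have n1: "P q q r \<noteq> 0" "P q q s \<noteq> 0" "P q q (r+1+s) \<noteq> 0" using P_nz[OF hq] by auto
  have n2: "1 - q * q^r \<noteq> 0" "1 - x * q^r \<noteq> 0" using hq hx by auto
  have e1: "r + 1 + s = Suc (r + s)" by simp
  show ?thesis using 0 n1 n2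
    apply (simp add: fV1_def gV1_def P_Suc e1 del: of_nat_Suc)
    apply (simp add: power_add)
    apply (simp add: divide_simps)
    apply (simp add: algebra_simps)
    done
next
  case (Suc j)
  have n1: "P q q r \<noteq> 0" "P q q j \<noteq> 0" "P x q j \<noteq> 0" "P q q s \<noteq> 0" "P q q (r+s) \<noteq> 0"
    using P_nz[OF hq] P_nz[OF hx] by auto
  have n2: "1 - q * q^r \<noteq> 0" "1 - q * q^j \<noteq> 0" "1 - x * q^j \<noteq> 0" "1 - q * q^(r+s) \<noteq> 0" using hq hx by auto
  have e1: "Suc j + r + 1 + s - Suc j = Suc (r+s)" "Suc j + r + 1 - Suc j = Suc r" "Suc j + r - Suc j = r"
     "Suc j + r + 1 + s - Suc (Suc j) = r + s" "Suc j + r + 1 - Suc (Suc j) = r" by auto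
  show ?thesis using Suc n1 n2
    apply (simp add: fV1_def gV1_def P_Suc e1 del: of_nat_Suc)
    apply (simp add: power_add)
    apply (simp add: divide_simps)
    apply (simp add: algebra_simps)
    done
qed


lemma V2_term:
  assumes hq: "\<And>k. 1 - q * q ^ k \<noteq> 0" and hx: "\<And>k. 1 - x * q ^ k \<noteq> 0"
  shows "(1 - x*q^(k+r))*(1-q^(k+r+1)) * fV2 x q (k+r+1+s) (k+r+1) k
        - (1 - x*q^((k+r+1+s)+(k+r))) * fV2 x q (k+r+1+s) (k+r) k
         = gV2 x q (k+r+1+s) (k+r) (k+1) - gV2 x q (k+r+1+s) (k+r) k"
proof (cases k)
  case 0
  have n1: "P q q r \<noteq> 0" "P q q s \<noteq> 0" "P q q (r+s) \<noteq> 0" using P_nz[OF hq] by auto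
  have n2: "1 - q * q^r \<noteq> 0" "1 - x * q^r \<noteq> 0" "1 - q * q^(r+s) \<noteq> 0" using hq hx by auto
  have e1: "r + 1 + s = Suc (r + s)" "r + 1 + s + 1 = Suc (Suc (r+s))" by simp_all
  show ?thesis using 0 n1 n2
    apply (simp add: fV2_def gV2_def P_Suc e1 del: of_nat_Suc)
    apply (simp add: power_add)
    apply (simp add: divide_simps)
    apply (simp add: algebra_simps)
    done
next
  case (Suc j)
  have n1: "P q q r \<noteq> 0" "P q q j \<noteq> 0" "P x q j \<noteq> 0" "P q q s \<noteq> 0" "P q q (r+s) \<noteq> 0"
    using P_nz[OF hq] P_nz[OF hx] by auto
  have n2: "1 - q * q^r \<noteq> 0" "1 - q * q^j \<noteq> 0" "1 - x * q^j \<noteq> 0" "1 - q * q^(r+s) \<noteq> 0" using hq hx by auto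
  have e1: "Suc j + r + 1 + s - Suc j = Suc (r+s)" "Suc j + r + 1 - Suc j = Suc r" "Suc j + r - Suc j = r"
     "Suc j + r + 1 + s - Suc (Suc j) = r + s" "Suc j + r + 1 - Suc (Suc j) = r"
     "Suc j + r + 1 + s + 1 - Suc j = Suc (Suc (r+s))" by auto
  show ?thesis using Suc n1 n2
    apply (simp add: fV2_def gV2_def P_Suc e1 del: of_nat_Suc)
    apply (simp add: power_add)
    apply (simp add: divide_simps)
    apply (simp add: algebra_simps)
    done
qed

lemma wz_step:
  fixes f1 f0 g :: "nat \<Rightarrow> complex"
  assumes "\<And>k. k \<le> b \<Longrightarrow> c * f1 k - d * f0 k = g (Suc k) - g k"
    and "c * f1 (Suc b) = - g (Suc b)" and "g 0 = 0"
  shows "c * (\<Sum>k\<le>Suc b. f1 k) = d * (\<Sum>k\<le>b. f0 k)"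
proof -
  have "(\<Sum>k\<le>b. c * f1 k - d * f0 k) = (\<Sum>k<Suc b. g (Suc k) - g k)"
    by (rule sum.cong) (auto simp: assms(1) less_Suc_eq_le)
  also have "\<dots> = g (Suc b)" using assms(3) by (simp add: sum_lessThan_telescope)
  finally have t: "(\<Sum>k\<le>b. c * f1 k) - (\<Sum>k\<le>b. d * f0 k) = g (Suc b)"
    by (simp add: sum_subtractf)
  have "c * (\<Sum>k\<le>Suc b. f1 k) = (\<Sum>k\<le>b. c * f1 k) + c * f1 (Suc b)"
    by (simp add: sum_distrib_left distrib_left)
  also have "\<dots> = (\<Sum>k\<le>b. d * f0 k)" using t assms(2) by (simp add: diff_eq_eq add.commute)
  finally show ?thesis by (simp add: sum_distrib_left)
qed

definition RV :: "complex \<Rightarrow> complex \<Rightarrow> nat \<Rightarrow> nat \<Rightarrow> complex" where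
  "RV x q a b = P x q (a+b) / (P x q a * P x q b * P q q a * P q q b)"

lemma RV_step:
  assumes hq: "\<And>k. 1 - q * q ^ k \<noteq> 0" and hx: "\<And>k. 1 - x * q ^ k \<noteq> 0"
  shows "(1 - x*q^b)*(1-q^(b+1)) * RV x q a (Suc b) = (1 - x*q^(a+b)) * RV x q a b"
proof -
  have n1: "P q q b \<noteq> 0" "P x q b \<noteq> 0" "P q q a \<noteq> 0" "P x q a \<noteq> 0" using P_nz[OF hq] P_nz[OF hx] by auto
  have n2: "1 - q * q^b \<noteq> 0" "1 - x * q^b \<noteq> 0" using hq hx by auto
  show ?thesis using n1 n2 unfolding RV_def
    by (simp add: P_Suc mult_ac del: of_nat_Suc)
qed

lemma from_step:
  fixes S R c :: complex
  assumes "c * S = d * R0" "c * R = d * R0" "c \<noteq> 0"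
  shows "S = R"
  using assms by (metis mult_left_cancel)

lemma V1_sum:
  assumes hq: "\<And>k. 1 - q * q ^ k \<noteq> 0" and hx: "\<And>k. 1 - x * q ^ k \<noteq> 0"
  shows "b \<le> a \<Longrightarrow> (\<Sum>k\<le>b. fV1 x q a b k) = RV x q a b"
proof (induction b)
  case 0
  have "P x q a \<noteq> 0" using P_nz[OF hx] by auto
  then show ?case by (simp add: fV1_def RV_def)
next
  case (Suc b)
  have ih: "(\<Sum>k\<le>b. fV1 x q a b k) = RV x q a b" using Suc by simp
  have "(1 - x*q^b)*(1-q^(b+1)) * (\<Sum>k\<le>Suc b. fV1 x q a (Suc b) k) = (1 - x*q^(a+b)) * (\<Sum>k\<le>b. fV1 x q a b k)"
  proof (rule wz_step[where g = "gV1 x q a b"])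
    fix k assume "k \<le> b"
    then obtain r where r: "b = k + r" using le_Suc_ex by blast
    obtain s where s: "a = k + r + 1 + s" using Suc.prems r by (metis add.commute add.left_commute le_Suc_ex Suc_eq_plus1)
    show "(1 - x*q^b)*(1-q^(b+1)) * fV1 x q a (Suc b) k - (1 - x*q^(a+b)) * fV1 x q a b k = gV1 x q a b (Suc k) - gV1 x q a b k"
      using V1_term[OF hq hx, of k r s] unfolding r s by simp
  next
    obtain s where s: "a = b + 1 + s" using Suc.prems by (metis Suc_eq_plus1 le_Suc_ex)
    have n1: "P q q b \<noteq> 0" "P x q b \<noteq> 0" using P_nz[OF hq] P_nz[OF hx] by auto
    have n2: "1 - q * q^b \<noteq> 0" "1 - x * q^b \<noteq> 0" using hq hx by auto
    show "(1 - x*q^b)*(1-q^(b+1)) * fV1 x q a (Suc b) (Suc b) = - gV1 x q a b (Suc b)"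
      using n1 n2 unfolding s by (simp add: fV1_def gV1_def P_Suc mult_ac del: of_nat_Suc)
  next
    show "gV1 x q a b 0 = 0" by (simp add: gV1_def)
  qed
  moreover have "(1 - x*q^b)*(1-q^(b+1)) * RV x q a (Suc b) = (1 - x*q^(a+b)) * RV x q a b"
    by (rule RV_step[OF hq hx])
  moreover have "(1 - x*q^b)*(1-q^(b+1)) \<noteq> 0" using hq hx by (simp add: )
  ultimately show ?case using ih by (metis from_step)
qed

lemma V2_sum:
  assumes hq: "\<And>k. 1 - q * q ^ k \<noteq> 0" and hx: "\<And>k. 1 - x * q ^ k \<noteq> 0"
  shows "b \<le> a \<Longrightarrow> (\<Sum>k\<le>b. fV2 x q a b k) = RV x q a b"
proof (induction b)
  case 0
  have "P x q a \<noteq> 0" using P_nz[OF hx] by auto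
  then show ?case by (simp add: fV2_def RV_def)
next
  case (Suc b)
  have ih: "(\<Sum>k\<le>b. fV2 x q a b k) = RV x q a b" using Suc by simp
  have "(1 - x*q^b)*(1-q^(b+1)) * (\<Sum>k\<le>Suc b. fV2 x q a (Suc b) k) = (1 - x*q^(a+b)) * (\<Sum>k\<le>b. fV2 x q a b k)"
  proof (rule wz_step[where g = "gV2 x q a b"])
    fix k assume "k \<le> b"
    then obtain r where r: "b = k + r" using le_Suc_ex by blast
    obtain s where s: "a = k + r + 1 + s" using Suc.prems r by (metis add.commute add.left_commute le_Suc_ex Suc_eq_plus1)
    show "(1 - x*q^b)*(1-q^(b+1)) * fV2 x q a (Suc b) k - (1 - x*q^(a+b)) * fV2 x q a b k = gV2 x q a b (Suc k) - gV2 x q a b k"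
      using V2_term[OF hq hx, of k r s] unfolding r s by simp
  next
    obtain s where s: "a = b + 1 + s" using Suc.prems by (metis Suc_eq_plus1 le_Suc_ex)
    have n1: "P q q b \<noteq> 0" "P x q b \<noteq> 0" using P_nz[OF hq] P_nz[OF hx] by auto
    have n2: "1 - q * q^b \<noteq> 0" "1 - x * q^b \<noteq> 0" using hq hx by auto
    show "(1 - x*q^b)*(1-q^(b+1)) * fV2 x q a (Suc b) (Suc b) = - gV2 x q a b (Suc b)"
      using n1 n2 unfolding s by (simp add: fV2_def gV2_def P_Suc mult_ac del: of_nat_Suc)
  next
    show "gV2 x q a b 0 = 0" by (simp add: gV2_def)
  qed
  moreover have "(1 - x*q^b)*(1-q^(b+1)) * RV x q a (Suc b) = (1 - x*q^(a+b)) * RV x q a b"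
    by (rule RV_step[OF hq hx])
  moreover have "(1 - x*q^b)*(1-q^(b+1)) \<noteq> 0" using hq hx by (simp add: )
  ultimately show ?case using ih by (metis from_step)
qed

lemma fV1_sym: "fV1 x q a b k = fV1 x q b a k" by (simp add: fV1_def mult_ac)
lemma fV2_sym: "fV2 x q a b k = fV2 x q b a k" by (simp add: fV2_def mult_ac)
lemma RV_sym: "RV x q a b = RV x q b a" by (simp add: RV_def mult_ac add.commute)

lemma V1_all:
  assumes hq: "\<And>k. 1 - q * q ^ k \<noteq> 0" and hx: "\<And>k. 1 - x * q ^ k \<noteq> 0"
  shows "(\<Sum>k\<le>min a b. fV1 x q a b k) = RV x q a b"
proof (cases "b \<le> a")
  case True hence "min a b = b" by simp
  thus ?thesis using V1_sum[OF hq hx True] by simp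
next
  case False thus ?thesis using V1_sum[OF hq hx, of a b] by (simp add: min_def fV1_sym RV_sym)
qed

lemma V2_all:
  assumes hq: "\<And>k. 1 - q * q ^ k \<noteq> 0" and hx: "\<And>k. 1 - x * q ^ k \<noteq> 0"
  shows "(\<Sum>k\<le>min a b. fV2 x q a b k) = RV x q a b"
proof (cases "b \<le> a")
  case True hence "min a b = b" by simp
  thus ?thesis using V2_sum[OF hq hx True] by simp
next
  case False thus ?thesis using V2_sum[OF hq hx, of a b] by (simp add: min_def fV2_sym RV_sym)
qed



lemma sum_if_ge:
  fixes Y :: "nat \<Rightarrow> complex"
  shows "(\<Sum>b\<le>m. if k \<le> b then Y b else 0) = (if k \<le> m then (\<Sum>j\<le>m-k. Y (k+j)) else 0)"
proof (cases "k \<le> m")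
  case True
  have "(\<Sum>b\<le>m. if k \<le> b then Y b else 0) = (\<Sum>b\<in>{b\<in>{..m}. k \<le> b}. Y b)"
    by (metis (no_types) finite_atMost sum.inter_filter)
  also have "{b\<in>{..m}. k \<le> b} = {0+k..(m-k)+k}" using True by auto
  also have "(\<Sum>b\<in>{0+k..(m-k)+k}. Y b) = (\<Sum>j\<in>{0..m-k}. Y (j+k))"
    by (rule sum.shift_bounds_cl_nat_ivl)
  also have "\<dots> = (\<Sum>j\<le>m-k. Y (k+j))" by (simp add: atLeast0AtMost add.commute)
  finally show ?thesis using True by simp
next
  case False
  then show ?thesis by simp
qed

lemma triangle:
  fixes F :: "nat \<Rightarrow> nat \<Rightarrow> complex"
  shows "(\<Sum>a\<le>n. \<Sum>k\<le>a. F a k) = (\<Sum>k\<le>n. \<Sum>i\<le>n-k. F (k+i) k)"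
proof -
  have "(\<Sum>a\<le>n. \<Sum>k\<le>a. F a k) = (\<Sum>a\<le>n. \<Sum>k\<le>n. if k \<le> a then F a k else 0)"
  proof (rule sum.cong[OF refl])
    fix a assume "a \<in> {..n}"
    hence "{k\<in>{..n}. k \<le> a} = {..a}" by auto
    thus "(\<Sum>k\<le>a. F a k) = (\<Sum>k\<le>n. if k \<le> a then F a k else 0)"
      by (metis (no_types) finite_atMost sum.inter_filter)
  qed
  also have "\<dots> = (\<Sum>k\<le>n. \<Sum>a\<le>n. if k \<le> a then F a k else 0)" by (rule sum.swap)
  also have "\<dots> = (\<Sum>k\<le>n. \<Sum>i\<le>n-k. F (k+i) k)"
    by (rule sum.cong[OF refl]) (simp add: sum_if_ge)
  finally show ?thesis .
qed

lemma pow_sq_minus: "(q::complex) \<noteq> 0 \<Longrightarrow> q^(i*i-i) = q^(i*i) / q^i"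
  by (simp add: power_diff)

definition Wf :: "complex \<Rightarrow> complex \<Rightarrow> complex \<Rightarrow> nat \<Rightarrow> nat \<Rightarrow> nat \<Rightarrow> nat \<Rightarrow> complex" where
  "Wf z w q n m a b = (z/q)^a * (w/q)^b * (q^(a*a+b*b)/q^(a*b)) / (P q q (n-a) * P q q (m-b) * P z q a * P w q b)"

definition Ck :: "complex \<Rightarrow> complex \<Rightarrow> complex \<Rightarrow> nat \<Rightarrow> complex" where
  "Ck z w q k = (z*w/q)^k * q^(k*k-k) / (P q q k * P (z*w/q) q k * P z q k * P w q k)"

lemma point:
  assumes q0: "q \<noteq> 0" and hq: "\<And>k. 1 - q * q ^ k \<noteq> 0" and hz: "\<And>k. 1 - z * q ^ k \<noteq> 0"
    and hw: "\<And>k. 1 - w * q ^ k \<noteq> 0" and hx: "\<And>k. 1 - (z*w/q) * q ^ k \<noteq> 0"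
  shows "Wf z w q n m (k+i) (k+j) * fV2 (z*w/q) q (k+i) (k+j) k
       = Ck z w q k * fJ (z*q^k) q (n-k) i * fJ (w*q^k) q (m-k) j"
proof -
  have hz': "\<And>l. 1 - z * q ^ k * q ^ l \<noteq> 0" using hz by (metis mult.assoc power_add)
  have hw': "\<And>l. 1 - w * q ^ k * q ^ l \<noteq> 0" using hw by (metis mult.assoc power_add)
  have n1: "P q q k \<noteq> 0" "P q q i \<noteq> 0" "P q q j \<noteq> 0" "P q q (n-k-i) \<noteq> 0" "P q q (m-k-j) \<noteq> 0"
     "P z q k \<noteq> 0" "P w q k \<noteq> 0" "P (z*q^k) q i \<noteq> 0" "P (w*q^k) q j \<noteq> 0" "P (z*w/q) q k \<noteq> 0"
    using P_nz[OF hq] P_nz[OF hz] P_nz[OF hw] P_nz[OF hz'] P_nz[OF hw'] P_nz[OF hx] by auto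
  have e: "n - (k+i) = n - k - i" "m - (k+j) = m - k - j" "k + i - k = i" "k + j - k = j" by auto
  show ?thesis using n1 q0
    unfolding Wf_def Ck_def fJ_def fV2_def e P_add
    apply (simp add: pow_sq_minus[OF q0] power_mult_distrib power_divide)
    apply (simp add: algebra_simps power_add power_mult)
    apply (metis mult.commute power_mult)
    done
qed

lemma sum_min:
  fixes f :: "nat \<Rightarrow> complex"
  shows "(\<Sum>k\<le>min a b. f k) = (\<Sum>k\<le>a. if k \<le> b then f k else 0)"
proof -
  have "{k\<in>{..a}. k \<le> b} = {..min a b}" by auto
  thus ?thesis by (metis (no_types) finite_atMost sum.inter_filter)
qed

lemma Ck_J:
  assumes q0: "q \<noteq> 0" and hq: "\<And>k. 1 - q * q ^ k \<noteq> 0" and hz: "\<And>k. 1 - z * q ^ k \<noteq> 0"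
    and hw: "\<And>k. 1 - w * q ^ k \<noteq> 0" and hx: "\<And>k. 1 - (z*w/q) * q ^ k \<noteq> 0"
    and kn: "k \<le> n" and km: "k \<le> m"
  shows "Ck z w q k * (1 / (P q q (n-k) * P (z*q^k) q (n-k))) * (1 / (P q q (m-k) * P (w*q^k) q (m-k)))
       = fV1 (z*w/q) q n m k / (P z q n * P w q m)"
proof -
  have hz': "\<And>l. 1 - z * q ^ k * q ^ l \<noteq> 0" using hz by (metis mult.assoc power_add)
  have hw': "\<And>l. 1 - w * q ^ k * q ^ l \<noteq> 0" using hw by (metis mult.assoc power_add)
  have n1: "P q q k \<noteq> 0" "P q q (n-k) \<noteq> 0" "P q q (m-k) \<noteq> 0"
     "P z q k \<noteq> 0" "P w q k \<noteq> 0" "P (z*q^k) q (n-k) \<noteq> 0" "P (w*q^k) q (m-k) \<noteq> 0" "P (z*w/q) q k \<noteq> 0"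
    using P_nz[OF hq] P_nz[OF hz] P_nz[OF hw] P_nz[OF hz'] P_nz[OF hw'] P_nz[OF hx] by auto
  have pz: "P z q n = P z q k * P (z*q^k) q (n-k)" using P_add[of z q k "n-k"] kn by simp
  have pw: "P w q m = P w q k * P (w*q^k) q (m-k)" using P_add[of w q k "m-k"] km by simp
  show ?thesis using n1 unfolding pz pw Ck_def fV1_def
    by (simp add: field_simps)
qed

theorem star_nat:
  assumes q0: "q \<noteq> 0" and hq: "\<And>k. 1 - q * q ^ k \<noteq> 0" and hz: "\<And>k. 1 - z * q ^ k \<noteq> 0"
    and hw: "\<And>k. 1 - w * q ^ k \<noteq> 0" and hx: "\<And>k. 1 - (z*w/q) * q ^ k \<noteq> 0"
  shows "(\<Sum>a\<le>n. \<Sum>b\<le>m. Wf z w q n m a b * RV (z*w/q) q a b) = RV (z*w/q) q n m / (P z q n * P w q m)"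
proof -
  define x where "x = z*w/q"
  have hx': "\<And>k. 1 - x * q ^ k \<noteq> 0" using hx unfolding x_def .
  have "(\<Sum>a\<le>n. \<Sum>b\<le>m. Wf z w q n m a b * RV x q a b)
      = (\<Sum>a\<le>n. \<Sum>b\<le>m. \<Sum>k\<le>a. if k \<le> b then Wf z w q n m a b * fV2 x q a b k else 0)"
    by (simp add: V2_all[OF hq hx', symmetric] sum_distrib_left sum_min if_distrib cong: if_cong)
  also have "\<dots> = (\<Sum>a\<le>n. \<Sum>k\<le>a. \<Sum>b\<le>m. if k \<le> b then Wf z w q n m a b * fV2 x q a b k else 0)"
    by (rule sum.cong[OF refl]) (rule sum.swap)
  also have "\<dots> = (\<Sum>k\<le>n. \<Sum>i\<le>n-k. \<Sum>b\<le>m. if k \<le> b then Wf z w q n m (k+i) b * fV2 x q (k+i) b k else 0)"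
    by (rule triangle)
  also have "\<dots> = (\<Sum>k\<le>n. \<Sum>i\<le>n-k. if k \<le> m then (\<Sum>j\<le>m-k. Wf z w q n m (k+i) (k+j) * fV2 x q (k+i) (k+j) k) else 0)"
    by (simp add: sum_if_ge)
  also have "\<dots> = (\<Sum>k\<le>n. if k \<le> m then Ck z w q k * (\<Sum>i\<le>n-k. fJ (z*q^k) q (n-k) i) * (\<Sum>j\<le>m-k. fJ (w*q^k) q (m-k) j) else 0)"
  proof (rule sum.cong[OF refl])
    fix k assume "k \<in> {..n}"
    show "(\<Sum>i\<le>n-k. if k \<le> m then (\<Sum>j\<le>m-k. Wf z w q n m (k+i) (k+j) * fV2 x q (k+i) (k+j) k) else 0)
       = (if k \<le> m then Ck z w q k * (\<Sum>i\<le>n-k. fJ (z*q^k) q (n-k) i) * (\<Sum>j\<le>m-k. fJ (w*q^k) q (m-k) j) else 0)"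
    proof (cases "k \<le> m")
      case True
      have "Ck z w q k * (\<Sum>i\<le>n-k. fJ (z*q^k) q (n-k) i) * (\<Sum>j\<le>m-k. fJ (w*q^k) q (m-k) j)
          = (\<Sum>i\<le>n-k. \<Sum>j\<le>m-k. Ck z w q k * fJ (z*q^k) q (n-k) i * fJ (w*q^k) q (m-k) j)"
      proof -
        have "(\<Sum>i\<le>n-k. fJ (z*q^k) q (n-k) i) * (\<Sum>j\<le>m-k. fJ (w*q^k) q (m-k) j)
            = (\<Sum>i\<le>n-k. \<Sum>j\<le>m-k. fJ (z*q^k) q (n-k) i * fJ (w*q^k) q (m-k) j)"
          by (rule sum_product)
        hence "Ck z w q k * ((\<Sum>i\<le>n-k. fJ (z*q^k) q (n-k) i) * (\<Sum>j\<le>m-k. fJ (w*q^k) q (m-k) j))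
            = (\<Sum>i\<le>n-k. \<Sum>j\<le>m-k. Ck z w q k * (fJ (z*q^k) q (n-k) i * fJ (w*q^k) q (m-k) j))"
          by (simp add: sum_distrib_left)
        thus ?thesis by (simp add: mult.assoc)
      qed
      thus ?thesis using True unfolding x_def by (simp add: point[OF q0 hq hz hw hx])
    qed simp
  qed
  also have "\<dots> = (\<Sum>k\<le>n. if k \<le> m then fV1 x q n m k / (P z q n * P w q m) else 0)"
  proof (rule sum.cong[OF refl])
    fix k assume kn: "k \<in> {..n}"
    have hz': "\<And>l. 1 - z * q ^ k * q ^ l \<noteq> 0" using hz by (metis mult.assoc power_add)
    have hw': "\<And>l. 1 - w * q ^ k * q ^ l \<noteq> 0" using hw by (metis mult.assoc power_add)
    show "(if k \<le> m then Ck z w q k * (\<Sum>i\<le>n-k. fJ (z*q^k) q (n-k) i) * (\<Sum>j\<le>m-k. fJ (w*q^k) q (m-k) j) else 0)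
        = (if k \<le> m then fV1 x q n m k / (P z q n * P w q m) else 0)"
      using Ck_J[OF q0 hq hz hw hx, of k n m] kn unfolding x_def
      by (simp add: J_sum[OF hq hz'] J_sum[OF hq hw'])
  qed
  also have "\<dots> = (\<Sum>k\<le>min n m. fV1 x q n m k) / (P z q n * P w q m)"
  proof -
    have "\<And>k. (if k \<le> m then fV1 x q n m k / (P z q n * P w q m) else 0)
       = (if k \<le> m then fV1 x q n m k else 0) / (P z q n * P w q m)" by simp
    thus ?thesis by (simp add: sum_min sum_divide_distrib)
  qed
  also have "\<dots> = RV x q n m / (P z q n * P w q m)" by (simp add: V1_all[OF hq hx'])
  finally show ?thesis unfolding x_def .
qed



lemma qpoch_nat: "qpoch a q (int N) = P a q N"
  by (simp add: qpoch_def P_def)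

lemma qpoch_neg_qq:
  assumes q0: "q \<noteq> 0" and n: "n < 0"
  shows "qpoch q q n = 0"
proof -
  have "1 \<in> {1..nat (-n)}" using n by auto
  moreover have "1 - q * inverse q ^ 1 = 0" using q0 by simp
  ultimately have "(\<Prod>k\<in>{1..nat (- n)}. (1 - q * inverse q ^ k)) = 0"
    by (meson finite_atLeastAtMost prod_zero)
  thus ?thesis using n by (simp add: qpoch_def)
qed

lemma qpoch_succ:
  assumes q0: "q \<noteq> 0" and g: "\<And>j::int. 1 - a * q powi j \<noteq> 0"
  shows "qpoch a q (n+1) = qpoch a q n * (1 - a * q powi n)"
proof (cases "0 \<le> n")
  case True
  then obtain N where N: "n = int N" by (metis nonneg_eq_int)
  show ?thesis unfolding N using qpoch_nat[of a q "Suc N"] qpoch_nat[of a q N]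
    by (simp add: P_Suc add.commute)
next
  case False
  show ?thesis
  proof (cases "n = -1")
    case True
    have "1 - a * inverse q \<noteq> 0" using g[of "-1"] by (simp add: power_int_minus)
    then show ?thesis using True by (simp add: qpoch_def power_int_minus)
  next
    case False2: False
    define M where "M = nat (-n-1)"
    have M1: "nat (-n) = Suc M" using False unfolding M_def by simp
    have M2: "nat (-(n+1)) = M" unfolding M_def by simp
    have pw: "q powi n = inverse q ^ Suc M"
    proof -
      have "n = - int (Suc M)" using False unfolding M_def by simp
      moreover have "q powi (- int (Suc M)) = inverse (q ^ Suc M)"
        by (subst power_int_minus) (simp only: power_int_of_nat)
      ultimately show ?thesis by (simp only: power_inverse)
    qed
    have f: "1 - a * inverse q ^ Suc M \<noteq> 0" using g[of n] pw by simp
    have "qpoch a q n = inverse ((\<Prod>k\<in>{1..M}. (1 - a * inverse q ^ k)) * (1 - a * inverse q ^ Suc M))"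
      using False M1 by (simp add: qpoch_def prod.nat_ivl_Suc')
    moreover have "qpoch a q (n+1) = inverse (\<Prod>k\<in>{1..M}. (1 - a * inverse q ^ k))"
      using False False2 M2 by (simp add: qpoch_def)
    ultimately show ?thesis using f pw by (simp add: inverse_mult_distrib)
  qed
qed

lemma qpoch_nz:
  assumes q0: "q \<noteq> 0" and g: "\<And>j::int. 1 - a * q powi j \<noteq> 0"
  shows "qpoch a q n \<noteq> 0"
proof (cases "0 \<le> n")
  case True
  then show ?thesis using g[of "int k" for k] by (simp add: qpoch_def)
next
  case False
  have "\<And>k. 1 - a * inverse q ^ k \<noteq> 0" using g[of "- int k" for k] by (simp add: power_int_minus power_inverse)
  then show ?thesis using False by (simp add: qpoch_def)
qed

lemma qpoch_0[simp]: "qpoch a q 0 = 1" by (simp add: qpoch_def)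

lemma pw_add: "(q::complex) \<noteq> 0 \<Longrightarrow> q powi m * q powi n = q powi (m+n)"
  by (simp add: power_int_add)

lemma good_shift:
  fixes a q :: complex
  assumes q0: "q \<noteq> 0" and g: "\<And>j::int. 1 - a * q powi j \<noteq> 0"
  shows "1 - a * q powi k * q powi j \<noteq> 0"
  using g[of "k+j"] pw_add[OF q0, of k j] by (simp add: mult.assoc)

lemma qpoch_shift:
  assumes q0: "q \<noteq> 0" and g: "\<And>j::int. 1 - a * q powi j \<noteq> 0"
  shows "qpoch (a * q powi k) q n * qpoch a q k = qpoch a q (n+k)"
proof (induction n rule: int_induct[where k=0])
  case base
  then show ?case by simp
next
  case (step1 i)
  have "qpoch (a * q powi k) q (i+1) = qpoch (a * q powi k) q i * (1 - a * q powi k * q powi i)"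
    by (rule qpoch_succ[OF q0 good_shift[OF q0 g]])
  moreover have "qpoch a q (i+1+k) = qpoch a q (i+k) * (1 - a * q powi (i+k))"
    using qpoch_succ[OF q0 g, of "i+k"] by (simp add: add_ac)
  moreover have "q powi k * q powi i = q powi (i+k)" using pw_add[OF q0, of k] by (simp add: add.commute)
  ultimately show ?case using step1.IH by (simp add: mult_ac)
next
  case (step2 i)
  have "qpoch (a * q powi k) q (i-1+1) = qpoch (a * q powi k) q (i-1) * (1 - a * q powi k * q powi (i-1))"
    by (rule qpoch_succ[OF q0 good_shift[OF q0 g]])
  moreover have "qpoch a q (i-1+k+1) = qpoch a q (i-1+k) * (1 - a * q powi (i-1+k))"
    by (rule qpoch_succ[OF q0 g])
  moreover have "q powi k * q powi (i-1) = q powi (i-1+k)" using pw_add[OF q0, of k] by (simp add: add.commute)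
  moreover have "1 - a * q powi (i-1+k) \<noteq> 0" by (rule g)
  ultimately show ?case using step2.IH
    by (smt (verit) add.commute diff_add_cancel group_cancel.add2 mult.assoc mult.commute mult_cancel_right)
qed

lemma sum_int_range:
  fixes f :: "int \<Rightarrow> complex"
  shows "(\<Sum>r\<in>{0..int N}. f r) = (\<Sum>a\<le>N. f (int a))"
proof -
  have "{0..int N} = int ` {0..N}" using image_int_atLeastAtMost[of 0 N] by simp
  hence "(\<Sum>r\<in>{0..int N}. f r) = (\<Sum>a\<in>{0..N}. f (int a))"
    by (simp add: sum.reindex)
  thus ?thesis by (simp add: atLeast0AtMost)
qed

lemma hyp_nat:
  fixes q Z W :: complex
  assumes q0: "q \<noteq> 0" and hq: "\<And>k::nat. k > 0 \<Longrightarrow> q ^ k \<noteq> 1"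
    and hZ: "\<And>k::int. Z \<noteq> q powi k" and hZW: "\<And>k::int. Z * W \<noteq> q powi k"
  shows "\<And>k. 1 - q * q ^ k \<noteq> 0" "\<And>k. 1 - Z * q ^ k \<noteq> 0" "\<And>k. 1 - (Z*W/q) * q ^ k \<noteq> 0"
proof -
  fix k :: nat
  show "1 - q * q ^ k \<noteq> 0" using hq[of "Suc k"] by simp
  show "1 - Z * q ^ k \<noteq> 0"
  proof
    assume "1 - Z * q ^ k = 0"
    hence "Z = inverse (q^k)" using q0 by (simp add: field_simps)
    hence "Z = q powi (- int k)" by (simp add: power_int_minus)
    thus False using hZ by blast
  qed
  show "1 - (Z*W/q) * q ^ k \<noteq> 0"
  proof
    assume "1 - (Z*W/q) * q ^ k = 0"
    hence "Z*W = q * inverse (q^k)" using q0 by (simp add: field_simps)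
    also have "\<dots> = q powi (1 - int k)" using q0
      by (simp add: power_int_diff power_int_minus divide_inverse)
    finally show False using hZW by blast
  qed
qed

lemma star_int:
  fixes Z W q :: complex and n m :: int
  assumes q0: "q \<noteq> 0" and hq: "\<And>k::nat. k > 0 \<Longrightarrow> q ^ k \<noteq> 1"
    and hZ: "\<And>k::int. Z \<noteq> q powi k" and hW: "\<And>k::int. W \<noteq> q powi k"
    and hZW: "\<And>k::int. Z * W \<noteq> q powi k"
  shows "(\<Sum>r\<in>{0..n}. \<Sum>s\<in>{0..m}. Kker n m r s (Z/q) (W/q) q * Phi0 r s 0 0 0 (Z/q) (W/q) q)
       = Phi0 n m 0 0 0 (Z/q) (W/q) q"
proof (cases "n < 0 \<or> m < 0")
  case True
  hence "qpoch q q n = 0 \<or> qpoch q q m = 0" using qpoch_neg_qq[OF q0] by blast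
  thus ?thesis using True by (auto simp: Phi0_def)
next
  case False
  then obtain N M where N: "n = int N" and M: "m = int M" by (metis nonneg_eq_int not_less)
  have WZ: "W * Z \<noteq> q powi k" for k using hZW[of k] by (simp add: mult.commute)
  note h1 = hyp_nat[OF q0 hq hZ hZW] and h2 = hyp_nat[OF q0 hq hW WZ]
  have xx: "W * Z / q = Z * W / q" by (simp add: mult.commute)
  have e1: "Z / q * (W / q) * q = Z * W / q" "Z / q * q = Z" "W / q * q = W" using q0 by (simp_all add: field_simps)
  have trm: "Kker (int N) (int M) (int a) (int b) (Z/q) (W/q) q * Phi0 (int a) (int b) 0 0 0 (Z/q) (W/q) q
       = Wf Z W q N M a b * RV (Z*W/q) q a b" if "a \<le> N" "b \<le> M" for a b
  proof -
    have p: "q powi ((int a)\<^sup>2 - int a * int b + (int b)\<^sup>2) = q^(a*a+b*b) / q^(a*b)"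
    proof -
      have ex: "(int a)\<^sup>2 - int a * int b + (int b)\<^sup>2 = int (a*a+b*b) - int (a*b)" by (simp add: power2_eq_square)
      have "q powi (int (a*a+b*b) - int (a*b)) = q powi (int (a*a+b*b)) / q powi (int (a*b))"
        using q0 by (rule power_int_diff[OF disjI1])
      thus ?thesis unfolding ex by (simp only: power_int_of_nat)
    qed
    have d: "int N - int a = int (N - a)" "int M - int b = int (M - b)" using that by auto
    show ?thesis unfolding Kker_def Phi0_def Wf_def RV_def p d e1
      using qpoch_nat[of "Z*W/q" q "a+b"]
      by (simp add: qpoch_nat power_int_of_nat mult_ac del: of_nat_diff)
  qed
  have "(\<Sum>r\<in>{0..n}. \<Sum>s\<in>{0..m}. Kker n m r s (Z/q) (W/q) q * Phi0 r s 0 0 0 (Z/q) (W/q) q)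
      = (\<Sum>a\<le>N. \<Sum>b\<le>M. Wf Z W q N M a b * RV (Z*W/q) q a b)"
    unfolding N M sum_int_range by (intro sum.cong refl) (simp add: trm)
  also have "\<dots> = RV (Z*W/q) q N M / (P Z q N * P W q M)"
    by (rule star_nat[OF q0 h1(1) h1(2) h2(2) h1(3)])
  also have "\<dots> = Phi0 n m 0 0 0 (Z/q) (W/q) q"
    unfolding N M Phi0_def e1 RV_def
    using qpoch_nat[of "Z*W/q" q "N+M"]
    by (simp add: qpoch_nat mult_ac)
  finally show ?thesis .
qed



lemma sum_shift_int:
  fixes g :: "int \<Rightarrow> complex"
  shows "(\<Sum>r\<in>{a..b}. g r) = (\<Sum>r\<in>{0..b-a}. g (r+a))"
proof -
  have "{a..b} = (\<lambda>r. r + a) ` {0..b-a}" by simp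
  moreover have "sum g ((\<lambda>r. r + a) ` {0..b-a}) = sum (g \<circ> (\<lambda>r. r + a)) {0..b-a}"
    by (rule sum.reindex) (simp add: inj_on_def)
  ultimately show ?thesis by simp
qed

lemma good_of:
  fixes c q :: complex
  assumes q0: "q \<noteq> 0" and h: "\<And>k::int. c \<noteq> q powi k"
  shows "1 - c * q powi j \<noteq> 0"
proof
  assume "1 - c * q powi j = 0"
  hence "c = inverse (q powi j)" using q0 by (simp add: field_simps)
  hence "c = q powi (-j)" by (simp add: power_int_minus)
  thus False using h by blast
qed

lemma avoid_shift:
  fixes c q :: complex
  assumes q0: "q \<noteq> 0" and h: "\<And>k::int. c \<noteq> q powi k"
  shows "c * q powi d \<noteq> q powi k"
proof
  assume "c * q powi d = q powi k"
  hence "c = q powi k / q powi d" using q0 by (simp add: field_simps)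
  also have "\<dots> = q powi (k - d)" using q0 by (simp add: power_int_diff)
  finally show False using h by blast
qed

lemma avoid_div:
  fixes c q :: complex
  assumes q0: "q \<noteq> 0" and h: "\<And>k::int. c \<noteq> q powi k"
  shows "c / q \<noteq> q powi k"
  using avoid_shift[OF q0 h, of "-1" k] by (simp add: power_int_minus divide_inverse)

lemma qpoch_shift':
  assumes q0: "q \<noteq> 0" and g: "\<And>j::int. 1 - a * q powi j \<noteq> 0"
  shows "qpoch (a * q powi k) q n = qpoch a q (n+k) / qpoch a q k"
  using qpoch_shift[OF q0 g, of k n] qpoch_nz[OF q0 g, of k] by (simp add: field_simps)

lemma Phi0_shift:
  fixes z w q :: complex and a b y1 y2 y3 :: int
  assumes y: "y1 + y2 + y3 = 0" and q0: "q \<noteq> 0"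
    and hz: "\<And>k::int. z \<noteq> q powi k" and hw: "\<And>k::int. w \<noteq> q powi k"
    and hzw: "\<And>k::int. z * w \<noteq> q powi k"
  shows "Phi0 a b y1 y2 y3 (z/q) (w/q) q
       = Phi0 (a-y1) (b-(y1+y2)) 0 0 0 (z * q powi (y1-y2) / q) (w * q powi (y2-y3) / q) q
         / (qpoch z q (y1-y2) * qpoch w q (y2-y3) * qpoch (z*w/q) q (y1-y3))"
proof -
  define x where "x = z*w/q"
  have gz: "\<And>j. 1 - z * q powi j \<noteq> 0" by (rule good_of[OF q0 hz])
  have gw: "\<And>j. 1 - w * q powi j \<noteq> 0" by (rule good_of[OF q0 hw])
  have gx: "\<And>j. 1 - x * q powi j \<noteq> 0" unfolding x_def by (rule good_of[OF q0 avoid_div[OF q0 hzw]])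
  have e1: "z / q * (w / q) * q = x" "z / q * q = z" "w / q * q = w" using q0 by (simp_all add: field_simps x_def)
  have e2: "z * q powi (y1-y2) / q * (w * q powi (y2-y3) / q) * q = x * q powi (y1-y3)"
    "z * q powi (y1-y2) / q * q = z * q powi (y1-y2)" "w * q powi (y2-y3) / q * q = w * q powi (y2-y3)"
    using q0 pw_add[OF q0, of "y1-y2" "y2-y3"] by (simp_all add: field_simps x_def)
  have i: "a - y1 - 0 = a - y1" "b - (y1+y2) + 0 = b + y3" "a - y1 + (b - (y1+y2)) + (y1-y3) = a + b"
     "a - y1 - 0 + (y1-y2) = a - y2" "a - y1 - 0 + (y1-y3) = a - y3"
     "b - (y1+y2) + 0 + (y2-y3) = b + y2" "b - (y1+y2) + 0 + (y1-y3) = b + y1" using y by auto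
  have nz: "qpoch z q (y1-y2) \<noteq> 0" "qpoch w q (y2-y3) \<noteq> 0" "qpoch x q (y1-y3) \<noteq> 0"
    "qpoch z q (a-y2) \<noteq> 0" "qpoch x q (a-y3) \<noteq> 0" "qpoch w q (b+y2) \<noteq> 0" "qpoch x q (b+y1) \<noteq> 0"
    using qpoch_nz[OF q0 gz] qpoch_nz[OF q0 gw] qpoch_nz[OF q0 gx] by auto
  show ?thesis
  proof (cases "qpoch q q (a - y1) = 0 \<or> qpoch q q (b + y3) = 0")
    case True thus ?thesis
      unfolding Phi0_def e1 e2 qpoch_shift'[OF q0 gz] qpoch_shift'[OF q0 gw] qpoch_shift'[OF q0 gx] i
      by auto
  next
    case False thus ?thesis using nz
      unfolding Phi0_def e1 e2 qpoch_shift'[OF q0 gz] qpoch_shift'[OF q0 gw] qpoch_shift'[OF q0 gx] i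
      unfolding x_def[symmetric]
      by (simp add: field_simps)
  qed
qed

definition Cst :: "complex \<Rightarrow> complex \<Rightarrow> complex \<Rightarrow> int \<Rightarrow> int \<Rightarrow> complex" where
  "Cst z w q y1 y2 = (z/q) powi y1 * (w/q) powi (y1+y2) * q powi (y1\<^sup>2 - y1*(y1+y2) + (y1+y2)\<^sup>2)"

lemma Kker_shift:
  fixes z w q :: complex and n m r s y1 y2 y3 :: int
  assumes y: "y1 + y2 + y3 = 0" and q0: "q \<noteq> 0" and z0: "z \<noteq> 0" and w0: "w \<noteq> 0"
  shows "Kker n m (r+y1) (s+(y1+y2)) (z/q) (w/q) q
       = Cst z w q y1 y2 * Kker (n-y1) (m-(y1+y2)) r s (z * q powi (y1-y2) / q) (w * q powi (y2-y3) / q) q"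
proof -
  have y3: "y3 = -y1-y2" using y by simp
  have zq: "z/q \<noteq> 0" "w/q \<noteq> 0" using q0 z0 w0 by auto
  have ex: "(r+y1)\<^sup>2 - (r+y1)*(s+(y1+y2)) + (s+(y1+y2))\<^sup>2
        = ((r\<^sup>2 - r*s + s\<^sup>2) + (y1-y2)*r) + ((y2-y3)*s + (y1\<^sup>2 - y1*(y1+y2) + (y1+y2)\<^sup>2))"
    unfolding y3 by (simp add: power2_eq_square algebra_simps)
  have p1: "q powi ((r+y1)\<^sup>2 - (r+y1)*(s+(y1+y2)) + (s+(y1+y2))\<^sup>2)
       = q powi (r\<^sup>2 - r*s + s\<^sup>2) * (q powi (y1-y2)) powi r * ((q powi (y2-y3)) powi s
          * q powi (y1\<^sup>2 - y1*(y1+y2) + (y1+y2)\<^sup>2))"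
    unfolding ex pw_add[OF q0, symmetric] power_int_mult ..
  have p2: "(z/q) powi (r+y1) = (z/q) powi r * (z/q) powi y1" "(w/q) powi (s+(y1+y2)) = (w/q) powi s * (w/q) powi (y1+y2)"
    using pw_add[OF zq(1)] pw_add[OF zq(2)] by auto
  have p3: "(z * q powi (y1-y2) / q) powi r = (z/q) powi r * (q powi (y1-y2)) powi r"
     "(w * q powi (y2-y3) / q) powi s = (w/q) powi s * (q powi (y2-y3)) powi s"
    by (simp_all add: power_int_mult_distrib mult.commute mult.left_commute divide_inverse)
  have i: "n - (r + y1) = n - y1 - r" "m - (s + (y1+y2)) = m - (y1+y2) - s" by auto
  show ?thesis unfolding Kker_def p1 p2 p3 i Cst_def by (simp add: mult_ac)
qed

lemma reindex:
  fixes z w q :: complex and n m y1 y2 y3 :: int and f :: "int \<Rightarrow> int \<Rightarrow> complex"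
  assumes y: "y1 + y2 + y3 = 0" and q0: "q \<noteq> 0" and z0: "z \<noteq> 0" and w0: "w \<noteq> 0"
  shows "(\<Sum>r\<in>{y1..n}. \<Sum>s\<in>{y1+y2..m}. Kker n m r s (z/q) (w/q) q * f (r-y1) (s-(y1+y2)))
       = Cst z w q y1 y2 * (\<Sum>r\<in>{0..n-y1}. \<Sum>s\<in>{0..m-(y1+y2)}.
            Kker (n-y1) (m-(y1+y2)) r s (z * q powi (y1-y2) / q) (w * q powi (y2-y3) / q) q * f r s)"
  unfolding sum_shift_int[of _ y1 n] sum_shift_int[of _ "y1+y2" m]
  by (simp add: Kker_shift[OF y q0 z0 w0] sum_distrib_left mult.assoc)

lemma perterm:
  fixes z w q :: complex and n m y1 y2 y3 :: int
  assumes y: "y1 + y2 + y3 = 0" and q0: "q \<noteq> 0" and hq: "\<And>k::nat. k > 0 \<Longrightarrow> q ^ k \<noteq> 1"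
    and z0: "z \<noteq> 0" and w0: "w \<noteq> 0"
    and hz: "\<And>k::int. z \<noteq> q powi k" and hw: "\<And>k::int. w \<noteq> q powi k"
    and hzw: "\<And>k::int. z * w \<noteq> q powi k"
  shows "(\<Sum>r\<in>{y1..n}. \<Sum>s\<in>{y1+y2..m}. Kker n m r s (z/q) (w/q) q * Phi0 r s y1 y2 y3 (z/q) (w/q) q)
       = Cst z w q y1 y2 * Phi0 n m y1 y2 y3 (z/q) (w/q) q"
proof -
  define z' where "z' = z * q powi (y1-y2)"
  define w' where "w' = w * q powi (y2-y3)"
  define D where "D = qpoch z q (y1-y2) * qpoch w q (y2-y3) * qpoch (z*w/q) q (y1-y3)"
  have hz': "\<And>k. z' \<noteq> q powi k" unfolding z'_def by (rule avoid_shift[OF q0 hz])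
  have hw': "\<And>k. w' \<noteq> q powi k" unfolding w'_def by (rule avoid_shift[OF q0 hw])
  have zw': "z' * w' = z * w * q powi (y1-y3)"
    unfolding z'_def w'_def using pw_add[OF q0, of "y1-y2" "y2-y3"] by (simp add: mult_ac)
  have hzw': "\<And>k. z' * w' \<noteq> q powi k" unfolding zw' by (rule avoid_shift[OF q0 hzw])
  note sh = Phi0_shift[OF y q0 hz hw hzw]
  have "(\<Sum>r\<in>{y1..n}. \<Sum>s\<in>{y1+y2..m}. Kker n m r s (z/q) (w/q) q * Phi0 r s y1 y2 y3 (z/q) (w/q) q)
      = (\<Sum>r\<in>{y1..n}. \<Sum>s\<in>{y1+y2..m}. Kker n m r s (z/q) (w/q) q *
            (\<lambda>a b. Phi0 a b 0 0 0 (z'/q) (w'/q) q / D) (r-y1) (s-(y1+y2)))"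
    unfolding sh z'_def w'_def D_def by simp
  also have "\<dots> = Cst z w q y1 y2 * (\<Sum>r\<in>{0..n-y1}. \<Sum>s\<in>{0..m-(y1+y2)}.
            Kker (n-y1) (m-(y1+y2)) r s (z'/q) (w'/q) q * (Phi0 r s 0 0 0 (z'/q) (w'/q) q / D))"
    unfolding z'_def w'_def by (rule reindex[OF y q0 z0 w0])
  also have "\<dots> = Cst z w q y1 y2 * ((\<Sum>r\<in>{0..n-y1}. \<Sum>s\<in>{0..m-(y1+y2)}.
            Kker (n-y1) (m-(y1+y2)) r s (z'/q) (w'/q) q * Phi0 r s 0 0 0 (z'/q) (w'/q) q) / D)"
    by (simp add: sum_divide_distrib)
  also have "\<dots> = Cst z w q y1 y2 * (Phi0 (n-y1) (m-(y1+y2)) 0 0 0 (z'/q) (w'/q) q / D)"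
    by (simp add: star_int[OF q0 hq hz' hw' hzw'])
  also have "\<dots> = Cst z w q y1 y2 * Phi0 n m y1 y2 y3 (z/q) (w/q) q"
    unfolding sh z'_def w'_def D_def by simp
  finally show ?thesis .
qed



lemma sigma_cases:
  fixes \<sigma> :: "int \<Rightarrow> int"
  assumes p: "\<sigma> permutes {1,2,3}"
  shows "(\<sigma> 1 = 1 \<and> \<sigma> 2 = 2 \<and> \<sigma> 3 = 3) \<or> (\<sigma> 1 = 1 \<and> \<sigma> 2 = 3 \<and> \<sigma> 3 = 2) \<or>
         (\<sigma> 1 = 2 \<and> \<sigma> 2 = 1 \<and> \<sigma> 3 = 3) \<or> (\<sigma> 1 = 2 \<and> \<sigma> 2 = 3 \<and> \<sigma> 3 = 1) \<or>
         (\<sigma> 1 = 3 \<and> \<sigma> 2 = 1 \<and> \<sigma> 3 = 2) \<or> (\<sigma> 1 = 3 \<and> \<sigma> 2 = 2 \<and> \<sigma> 3 = 1)"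
proof -
  have m: "\<sigma> 1 \<in> {1,2,3}" "\<sigma> 2 \<in> {1,2,3}" "\<sigma> 3 \<in> {1,2,3}"
    using permutes_in_image[OF p, of 1] permutes_in_image[OF p, of 2] permutes_in_image[OF p, of 3] by simp_all
  have i: "inj \<sigma>" using permutes_inj[OF p] .
  have d: "\<sigma> 1 \<noteq> \<sigma> 2" "\<sigma> 1 \<noteq> \<sigma> 3" "\<sigma> 2 \<noteq> \<sigma> 3"
    using inj_eq[OF i, of 1 2] inj_eq[OF i, of 1 3] inj_eq[OF i, of 2 3] by simp_all
  have m': "\<sigma> 1 = 1 \<or> \<sigma> 1 = 2 \<or> \<sigma> 1 = 3" "\<sigma> 2 = 1 \<or> \<sigma> 2 = 2 \<or> \<sigma> 2 = 3"
     "\<sigma> 3 = 1 \<or> \<sigma> 3 = 2 \<or> \<sigma> 3 = 3" using m by simp_all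
  show ?thesis using m' d by (elim disjE; simp)
qed

lemma Phi0_zero1:
  assumes q0: "(q::complex) \<noteq> 0" and "r < y1"
  shows "Phi0 r s y1 y2 y3 z w q = 0"
  using qpoch_neg_qq[OF q0, of "r-y1"] assms by (simp add: Phi0_def)

lemma Phi0_zero2:
  assumes q0: "(q::complex) \<noteq> 0" and "s + y3 < 0"
  shows "Phi0 r s y1 y2 y3 z w q = 0"
  using qpoch_neg_qq[OF q0, of "s+y3"] assms by (simp add: Phi0_def)

lemma range_ext:
  fixes z w q :: complex and n m y1 y2 y3 :: int
  assumes y: "y1 + y2 + y3 = 0" and q0: "q \<noteq> 0" and p1: "0 \<le> y1" and p2: "0 \<le> y1 + y2"
  shows "(\<Sum>r\<in>{0..n}. \<Sum>s\<in>{0..m}. Kker n m r s (z/q) (w/q) q * Phi0 r s y1 y2 y3 (z/q) (w/q) q)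
       = (\<Sum>r\<in>{y1..n}. \<Sum>s\<in>{y1+y2..m}. Kker n m r s (z/q) (w/q) q * Phi0 r s y1 y2 y3 (z/q) (w/q) q)"
proof -
  have inner: "(\<Sum>s\<in>{0..m}. Kker n m r s (z/q) (w/q) q * Phi0 r s y1 y2 y3 (z/q) (w/q) q)
       = (\<Sum>s\<in>{y1+y2..m}. Kker n m r s (z/q) (w/q) q * Phi0 r s y1 y2 y3 (z/q) (w/q) q)" for r
  proof (rule sum.mono_neutral_right)
    show "finite {0..m}" by simp
    show "{y1+y2..m} \<subseteq> {0..m}" using p2 by auto
    show "\<forall>s\<in>{0..m} - {y1+y2..m}. Kker n m r s (z/q) (w/q) q * Phi0 r s y1 y2 y3 (z/q) (w/q) q = 0"
      using Phi0_zero2[OF q0] y by auto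
  qed
  show ?thesis unfolding inner
  proof (rule sum.mono_neutral_right)
    show "finite {0..n}" by simp
    show "{y1..n} \<subseteq> {0..n}" using p1 by auto
    show "\<forall>r\<in>{0..n} - {y1..n}. (\<Sum>s\<in>{y1+y2..m}. Kker n m r s (z/q) (w/q) q * Phi0 r s y1 y2 y3 (z/q) (w/q) q) = 0"
      using Phi0_zero1[OF q0] by auto
  qed
qed

lemma Cst_eq:
  fixes z w q :: complex and y1 y2 :: int
  assumes q0: "q \<noteq> 0" and p1: "0 \<le> y1" and p2: "0 \<le> y1 + y2"
    and e: "y1\<^sup>2 - y1*(y1+y2) + (y1+y2)\<^sup>2 = y1 + (y1+y2)"
  shows "Cst z w q y1 y2 = z ^ nat y1 * w ^ nat (y1+y2)"
proof -
  obtain A where A: "y1 = int A" using p1 by (metis nonneg_eq_int)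
  obtain B where B: "y1 + y2 = int B" using p2 by (metis nonneg_eq_int)
  have ee: "y1\<^sup>2 - y1*(y1+y2) + (y1+y2)\<^sup>2 = int A + int B" using e A B by simp
  have "q powi (y1\<^sup>2 - y1*(y1+y2) + (y1+y2)\<^sup>2) = q ^ A * q ^ B"
    unfolding ee using pw_add[OF q0, of "int A" "int B"] by (simp add: power_int_of_nat)
  thus ?thesis unfolding Cst_def using q0 A B
    by (simp add: power_int_of_nat power_divide)
qed

lemma perterm_sigma:
  fixes z w q :: complex and n m :: int and \<sigma> :: "int \<Rightarrow> int"
  assumes p: "\<sigma> permutes {1,2,3}" and q0: "q \<noteq> 0" and hq: "\<And>k::nat. k > 0 \<Longrightarrow> q ^ k \<noteq> 1"
    and z0: "z \<noteq> 0" and w0: "w \<noteq> 0"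
    and hz: "\<And>k::int. z \<noteq> q powi k" and hw: "\<And>k::int. w \<noteq> q powi k"
    and hzw: "\<And>k::int. z * w \<noteq> q powi k"
  shows "(\<Sum>r\<in>{0..n}. \<Sum>s\<in>{0..m}. Kker n m r s (z/q) (w/q) q * Phi0 r s (\<sigma> 1 - 1) (\<sigma> 2 - 2) (\<sigma> 3 - 3) (z/q) (w/q) q)
       = z ^ nat (\<sigma> 1 - 1) * w ^ nat (3 - \<sigma> 3) * Phi0 n m (\<sigma> 1 - 1) (\<sigma> 2 - 2) (\<sigma> 3 - 3) (z/q) (w/q) q"
proof -
  have y: "(\<sigma> 1 - 1) + (\<sigma> 2 - 2) + (\<sigma> 3 - 3) = 0" using sigma_cases[OF p] by (elim disjE; simp)
  have p1: "0 \<le> \<sigma> 1 - 1" using sigma_cases[OF p] by (elim disjE; simp)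
  have p2: "0 \<le> (\<sigma> 1 - 1) + (\<sigma> 2 - 2)" using sigma_cases[OF p] by (elim disjE; simp)
  have c: "Cst z w q (\<sigma> 1 - 1) (\<sigma> 2 - 2) = z ^ nat (\<sigma> 1 - 1) * w ^ nat (3 - \<sigma> 3)"
  proof -
    have e: "(\<sigma> 1 - 1)\<^sup>2 - (\<sigma> 1 - 1)*((\<sigma> 1 - 1)+(\<sigma> 2 - 2)) + ((\<sigma> 1 - 1)+(\<sigma> 2 - 2))\<^sup>2
            = (\<sigma> 1 - 1) + ((\<sigma> 1 - 1)+(\<sigma> 2 - 2))"
      using sigma_cases[OF p] by (elim disjE; simp add: power2_eq_square)
    have "nat ((\<sigma> 1 - 1)+(\<sigma> 2 - 2)) = nat (3 - \<sigma> 3)" using y by (simp add: algebra_simps)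
    thus ?thesis using Cst_eq[OF q0 p1 p2 e] by simp
  qed
  show ?thesis
    using range_ext[OF y q0 p1 p2, of n m z w] perterm[OF y q0 hq z0 w0 hz hw hzw, of n m] c by simp
qed

definition coef :: "(int \<Rightarrow> int) \<Rightarrow> complex \<Rightarrow> complex \<Rightarrow> complex \<Rightarrow> complex \<Rightarrow> complex \<Rightarrow> complex \<Rightarrow> complex" where
  "coef \<sigma> u v c d z w = of_int (sign \<sigma>) * (u * z) ^ nat (\<sigma> 1 - 1)
        * (if \<sigma> 3 = 1 then v / d else 1)
        * (if \<sigma> 1 = 3 then c / u else 1)
        * (d * w) ^ nat (3 - \<sigma> 3)"

lemma PhiS_coef: "PhiS n m u v c d z w q =
   (\<Sum>\<sigma>\<in>{\<sigma>::int \<Rightarrow> int. \<sigma> permutes {1,2,3}}. coef \<sigma> u v c d z w * Phi0 n m (\<sigma> 1 - 1) (\<sigma> 2 - 2) (\<sigma> 3 - 3) (z / q) (w / q) q)"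
  unfolding PhiS_def coef_def ..

lemma coef_scale:
  assumes "z \<noteq> 0" "w \<noteq> 0"
  shows "coef \<sigma> (u*z) (v*w) (c*z) (d*w) z w = coef \<sigma> u v c d z w * (z ^ nat (\<sigma> 1 - 1) * w ^ nat (3 - \<sigma> 3))"
  using assms unfolding coef_def by (simp add: power_mult_distrib mult_ac)

theorem thm_y0:
  fixes z w q u v c d :: complex and n m :: int
  assumes q0: "q \<noteq> 0" and hq: "\<And>k::nat. k > 0 \<Longrightarrow> q ^ k \<noteq> 1"
    and z0: "z \<noteq> 0" and w0: "w \<noteq> 0"
    and hz: "\<And>k::int. z \<noteq> q powi k" and hw: "\<And>k::int. w \<noteq> q powi k"
    and hzw: "\<And>k::int. z * w \<noteq> q powi k"
  shows "(\<Sum>r\<in>{0..n}. \<Sum>s\<in>{0..m}. Kker n m r s (z/q) (w/q) q * PhiS r s u v c d z w q)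
       = PhiS n m (u*z) (v*w) (c*z) (d*w) z w q"
proof -
  let ?S = "{\<sigma>::int \<Rightarrow> int. \<sigma> permutes {1,2,3}}"
  let ?P = "\<lambda>\<sigma> r s. Phi0 r s (\<sigma> 1 - 1) (\<sigma> 2 - 2) (\<sigma> 3 - 3) (z / q) (w / q) q"
  have "(\<Sum>r\<in>{0..n}. \<Sum>s\<in>{0..m}. Kker n m r s (z/q) (w/q) q * PhiS r s u v c d z w q)
      = (\<Sum>r\<in>{0..n}. \<Sum>s\<in>{0..m}. \<Sum>\<sigma>\<in>?S. coef \<sigma> u v c d z w * (Kker n m r s (z/q) (w/q) q * ?P \<sigma> r s))"
    unfolding PhiS_coef by (simp add: sum_distrib_left mult_ac)
  also have "\<dots> = (\<Sum>\<sigma>\<in>?S. coef \<sigma> u v c d z w * (\<Sum>r\<in>{0..n}. \<Sum>s\<in>{0..m}. Kker n m r s (z/q) (w/q) q * ?P \<sigma> r s))"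
  proof -
    have "(\<Sum>r\<in>{0..n}. \<Sum>s\<in>{0..m}. \<Sum>\<sigma>\<in>?S. coef \<sigma> u v c d z w * (Kker n m r s (z/q) (w/q) q * ?P \<sigma> r s))
        = (\<Sum>r\<in>{0..n}. \<Sum>\<sigma>\<in>?S. \<Sum>s\<in>{0..m}. coef \<sigma> u v c d z w * (Kker n m r s (z/q) (w/q) q * ?P \<sigma> r s))"
      by (rule sum.cong[OF refl], rule sum.swap)
    also have "\<dots> = (\<Sum>\<sigma>\<in>?S. \<Sum>r\<in>{0..n}. \<Sum>s\<in>{0..m}. coef \<sigma> u v c d z w * (Kker n m r s (z/q) (w/q) q * ?P \<sigma> r s))"
      by (rule sum.swap)
    also have "\<dots> = (\<Sum>\<sigma>\<in>?S. coef \<sigma> u v c d z w * (\<Sum>r\<in>{0..n}. \<Sum>s\<in>{0..m}. Kker n m r s (z/q) (w/q) q * ?P \<sigma> r s))"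
      by (simp only: sum_distrib_left)
    finally show ?thesis .
  qed
  also have "\<dots> = (\<Sum>\<sigma>\<in>?S. coef \<sigma> u v c d z w * (z ^ nat (\<sigma> 1 - 1) * w ^ nat (3 - \<sigma> 3) * ?P \<sigma> n m))"
    by (rule sum.cong[OF refl]) (simp add: perterm_sigma[OF _ q0 hq z0 w0 hz hw hzw])
  also have "\<dots> = PhiS n m (u*z) (v*w) (c*z) (d*w) z w q"
    unfolding PhiS_coef coef_scale[OF z0 w0] by (simp add: mult_ac)
  finally show ?thesis .
qed



lemma Cst_final:
  fixes z w q :: complex and y1 y2 y3 :: int
  assumes y: "y1 + y2 + y3 = 0" and q0: "q \<noteq> 0"
  shows "Cst z w q y1 y2 = z powi y1 * w powi (y1 + y2) * q powi ((y1\<^sup>2 + y2\<^sup>2 + y3\<^sup>2) div 2 - 2 * y1 - y2)"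
proof -
  have y3: "y3 = -y1-y2" using y by simp
  have s: "y1\<^sup>2 + y2\<^sup>2 + y3\<^sup>2 = 2 * (y1\<^sup>2 - y1*(y1+y2) + (y1+y2)\<^sup>2)"
    unfolding y3 by (simp add: power2_eq_square algebra_simps)
  have d: "(y1\<^sup>2 + y2\<^sup>2 + y3\<^sup>2) div 2 - 2 * y1 - y2 = ((y1\<^sup>2 - y1*(y1+y2) + (y1+y2)\<^sup>2) - y1) - (y1+y2)"
    unfolding s by simp
  have qp: "q powi (((y1\<^sup>2 - y1*(y1+y2) + (y1+y2)\<^sup>2) - y1) - (y1+y2))
      = q powi (y1\<^sup>2 - y1*(y1+y2) + (y1+y2)\<^sup>2) / q powi y1 / q powi (y1+y2)"
  proof -
    let ?E = "y1\<^sup>2 - y1*(y1+y2) + (y1+y2)\<^sup>2"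
    have a: "q powi ((?E - y1) - (y1+y2)) = q powi (?E - y1) / q powi (y1+y2)"
      by (rule power_int_diff) (use q0 in simp)
    have b: "q powi (?E - y1) = q powi ?E / q powi y1"
      by (rule power_int_diff) (use q0 in simp)
    show ?thesis unfolding a b ..
  qed
  have nz: "q powi y1 \<noteq> 0" "q powi (y1+y2) \<noteq> 0" using q0 by auto
  show ?thesis unfolding Cst_def d qp power_int_divide_distrib using nz by (simp add: field_simps)
qed

theorem corollary4p11:
  fixes n m y1 y2 y3 :: int and u v c d z w q :: complex
  assumes "y1 + y2 + y3 = 0"
    and "q \<noteq> 0" and "\<And>k::nat. k > 0 \<Longrightarrow> q ^ k \<noteq> 1"
    and "z \<noteq> 0" and "w \<noteq> 0" and "u \<noteq> 0" and "d \<noteq> 0"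
    and "\<And>k::int. z \<noteq> q powi k" and "\<And>k::int. w \<noteq> q powi k"
    and "\<And>k::int. z * w \<noteq> q powi k"
  shows "(\<Sum>r\<in>{y1..n}. \<Sum>s\<in>{y1 + y2..m}.
            Kker n m r s (z / q) (w / q) q * PhiY r s y1 y2 y3 u v c d z w q)
       = z powi y1 * w powi (y1 + y2)
         * q powi ((y1\<^sup>2 + y2\<^sup>2 + y3\<^sup>2) div 2 - 2 * y1 - y2)
         * PhiY n m y1 y2 y3 (u * z * q powi (y1 - y2)) (v * w * q powi (y2 - y3))
                (c * z * q powi (y1 - y2)) (d * w * q powi (y2 - y3)) z w q"
proof -
  note y = assms(1) and q0 = assms(2) and hq = assms(3) and z0 = assms(4) and w0 = assms(5)
    and hz = assms(8) and hw = assms(9) and hzw = assms(10)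
  define z' where "z' = z * q powi (y1-y2)"
  define w' where "w' = w * q powi (y2-y3)"
  define D where "D = qpoch z q (y1-y2) * qpoch w q (y2-y3) * qpoch (z*w/q) q (y1-y3)"
  have z'0: "z' \<noteq> 0" "w' \<noteq> 0" unfolding z'_def w'_def using z0 w0 q0 by auto
  have hz': "\<And>k. z' \<noteq> q powi k" unfolding z'_def by (rule avoid_shift[OF q0 hz])
  have hw': "\<And>k. w' \<noteq> q powi k" unfolding w'_def by (rule avoid_shift[OF q0 hw])
  have zw': "z' * w' = z * w * q powi (y1-y3)"
    unfolding z'_def w'_def using pw_add[OF q0, of "y1-y2" "y2-y3"] by (simp add: mult_ac)
  have hzw': "\<And>k. z' * w' \<noteq> q powi k" unfolding zw' by (rule avoid_shift[OF q0 hzw])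
  have PY: "PhiY r s y1 y2 y3 U V C Dd z w q = PhiS (r-y1) (s-(y1+y2)) U V C Dd z' w' q / D" for r s U V C Dd
    unfolding PhiY_def z'_def w'_def D_def by (simp add: diff_diff_eq)
  have "(\<Sum>r\<in>{y1..n}. \<Sum>s\<in>{y1 + y2..m}. Kker n m r s (z / q) (w / q) q * PhiY r s y1 y2 y3 u v c d z w q)
      = (\<Sum>r\<in>{y1..n}. \<Sum>s\<in>{y1 + y2..m}. Kker n m r s (z / q) (w / q) q *
           (\<lambda>a b. PhiS a b u v c d z' w' q / D) (r-y1) (s-(y1+y2)))"
    unfolding PY by simp
  also have "\<dots> = Cst z w q y1 y2 * (\<Sum>r\<in>{0..n-y1}. \<Sum>s\<in>{0..m-(y1+y2)}.
            Kker (n-y1) (m-(y1+y2)) r s (z'/q) (w'/q) q * (PhiS r s u v c d z' w' q / D))"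
    unfolding z'_def w'_def by (rule reindex[OF y q0 z0 w0])
  also have "\<dots> = Cst z w q y1 y2 * ((\<Sum>r\<in>{0..n-y1}. \<Sum>s\<in>{0..m-(y1+y2)}.
            Kker (n-y1) (m-(y1+y2)) r s (z'/q) (w'/q) q * PhiS r s u v c d z' w' q) / D)"
    by (simp add: sum_divide_distrib)
  also have "\<dots> = Cst z w q y1 y2 * (PhiS (n-y1) (m-(y1+y2)) (u*z') (v*w') (c*z') (d*w') z' w' q / D)"
    by (simp add: thm_y0[OF q0 hq z'0(1) z'0(2) hz' hw' hzw'])
  also have "\<dots> = Cst z w q y1 y2 * PhiY n m y1 y2 y3 (u * z * q powi (y1 - y2)) (v * w * q powi (y2 - y3))
                (c * z * q powi (y1 - y2)) (d * w * q powi (y2 - y3)) z w q"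
    unfolding PY z'_def w'_def by (simp add: mult.assoc)
  finally show ?thesis unfolding Cst_final[OF y q0] .
qed

end
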